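(* For every $n\ge1$, $$\sum_{\deg\tau=n}\frac{B_\tau}{\tau!}=\frac{(-1)^{n+1}}{n},$$ where the sum runs over all non-associative monomials $\tau$ in one variable $x$ of degree $n$ (equivalently, rooted binary plane trees with $n$ leaves).
   Context: Bernoulli numbers $B_k$ are defined by $B_0=1$ and $\sum_{k=0}^{n-1}\frac{B_k}{k!(n-k)!}=0$ for $n\ge2$ (so $B_1=-1/2$). For a non-associative monomial $\tau$ in $x$: if $\tau=x$ set $B_\tau=1$, $\tau!=1$; otherwise $\tau$ can be written uniquely as $(\cdots((x\tau_1)\tau_2)\cdots)\tau_k$ with $k\ge1$ and monomials $\tau_1,\dots,\tau_k$, and one sets $B_\tau=B_k B_{\tau_1}\cdots B_{\tau_k}$ and $\tau!=k!\,\tau_1!\cdots\tau_k!$. The degree of $\tau$ is the number of occurrences of $x$. *)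

theory Defs
  imports Complex_Main
begin

text \<open>Non-associative monomials in one variable x: X is x, Mul a b is the product (a b).\<close>
datatype nam = X | Mul nam nam

fun deg :: "nam \<Rightarrow> nat" where
  "deg X = 1"
| "deg (Mul a b) = deg a + deg b"

text \<open>For tau = (...((x tau_1) tau_2)...) tau_k, args tau = [tau_1,...,tau_k].\<close>
fun args :: "nam \<Rightarrow> nam list" where
  "args X = []"
| "args (Mul a b) = args a @ [b]"

text \<open>Bernoulli numbers: B_0 = 1, sum_{k<n} B_k/(k!(n-k)!) = 0 for n >= 2, so B_1 = -1/2.
  Equivalently B_n = - n! * sum_{k<n} B_k / (k! (n+1-k)!) for n >= 1.\<close>
fun bern :: "nat \<Rightarrow> real" where
  "bern n = (if n = 0 then 1 else
     - fact n * (\<Sum>k\<in>{..<n}. (if k < n then bern k else 0) / (fact k * fact (n + 1 - k))))"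

text \<open>Bt t = B_k * prod_i B_{tau_i} and tfact t = k! * prod_i tau_i!, with k = length (args t).
  argsB / argsF compute the products over the spine arguments args t.\<close>
fun Bt :: "nam \<Rightarrow> real" and argsB :: "nam \<Rightarrow> real" where
  "Bt X = 1"
| "Bt (Mul a b) = bern (length (args (Mul a b))) * argsB (Mul a b)"
| "argsB X = 1"
| "argsB (Mul a b) = argsB a * Bt b"

fun tfact :: "nam \<Rightarrow> nat" and argsF :: "nam \<Rightarrow> nat" where
  "tfact X = 1"
| "tfact (Mul a b) = fact (length (args (Mul a b))) * argsF (Mul a b)"
| "argsF X = 1"
| "argsF (Mul a b) = argsF a * tfact b"

lemma argsB_eq: "argsB t = (\<Prod>s\<leftarrow>args t. Bt s)"
  by (induction t) auto

lemma argsF_eq: "argsF t = (\<Prod>s\<leftarrow>args t. tfact s)"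
  by (induction t) auto

end

theory Submission
  imports Defs "HOL-Computational_Algebra.Formal_Power_Series"
begin

unbundle fps_syntax

declare bern.simps[simp del]

definition ft :: "nam \<Rightarrow> real" where "ft t = Bt t / real (tfact t)"
definition gt :: "nam \<Rightarrow> real" where "gt t = argsB t / real (argsF t)"

lemma deg_pos: "deg t \<ge> 1"
  by (induction t) auto

lemma len_args_lt: "length (args t) < deg t"
  by (induction t) (auto simp: deg_pos less_le_trans)

lemma bern0: "bern 0 = 1"
  by (simp add: bern.simps)

lemma pos_aux: "argsF t > 0 \<and> tfact t > 0"
  by (induction t) auto

lemma argsF_pos: "argsF t > 0" using pos_aux by blast
lemma tfact_pos: "tfact t > 0" using pos_aux by blast

lemma deg_ne0[simp]: "deg t \<noteq> 0" using deg_pos[of t] by linarith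

lemma ft_eq: "ft t = bern (length (args t)) / fact (length (args t)) * gt t"
  by (cases t) (auto simp: ft_def gt_def bern0 tfact_pos argsF_pos algebra_simps)

lemma gt_Mul: "gt (Mul a b) = gt a * ft b"
  by (simp add: ft_def gt_def)

lemma gt_X: "gt X = 1" by (simp add: gt_def)

lemma fin_deg: "finite {t. deg t = n}"
proof (induction n rule: less_induct)
  case (less n)
  have "{t. deg t = n} \<subseteq> {X} \<union> (\<Union>i\<in>{..<n}. (\<lambda>(a,b). Mul a b) ` ({t. deg t = i} \<times> {t. deg t = n - i}))"
  proof
    fix t assume "t \<in> {t. deg t = n}"
    then show "t \<in> {X} \<union> (\<Union>i\<in>{..<n}. (\<lambda>(a,b). Mul a b) ` ({t. deg t = i} \<times> {t. deg t = n - i}))"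
    proof (cases t)
      case (Mul a b)
      with \<open>t \<in> _\<close> have "deg a < n" "deg b = n - deg a" using deg_pos[of b] deg_pos[of a] by auto
      then show ?thesis using Mul by (auto intro!: bexI[of _ "deg a"])
    qed auto
  qed
  moreover have "finite ({X} \<union> (\<Union>i\<in>{..<n}. (\<lambda>(a,b). Mul a b) ` ({t. deg t = i} \<times> {t. deg t = n - i})))"
  proof -
    have "finite ({t. deg t = i} \<times> {t. deg t = n - i})" if "i < n" for i
    proof (cases "i = 0")
      case True
      then have "{t. deg t = i} = {}" by auto
      then show ?thesis by simp
    next
      case False
      then show ?thesis using less that by auto
    qed
    then show ?thesis by auto
  qed
  ultimately show ?case by (rule finite_subset)
qed

definition C :: "nat \<Rightarrow> real" where "C n = (\<Sum>t\<in>{t. deg t = n}. ft t)"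
definition D :: "nat \<Rightarrow> nat \<Rightarrow> real" where
  "D k n = (\<Sum>t\<in>{t. deg t = n \<and> length (args t) = k}. gt t)"

lemma fin_degk: "finite {t. deg t = n \<and> P t}"
  by (rule finite_subset[OF _ fin_deg[of n]]) auto

lemma D0: "D 0 n = (if n = 1 then 1 else 0)"
proof -
  have "{t. deg t = n \<and> length (args t) = 0} = (if n = 1 then {X} else {})"
    apply (auto split: if_splits)
    apply (case_tac x; auto)+
    done
  then show ?thesis by (simp add: D_def gt_X)
qed

lemma DSuc: "D (Suc k) n = (\<Sum>i\<le>n. D k i * C (n - i))"
proof -
  let ?S = "{p. deg (fst p) + deg (snd p) = n \<and> length (args (fst p)) = k}"
  have img: "{t. deg t = n \<and> length (args t) = Suc k} = (\<lambda>(a,b). Mul a b) ` ?S"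
  proof (rule set_eqI, rule iffI)
    fix t assume "t \<in> {t. deg t = n \<and> length (args t) = Suc k}"
    then show "t \<in> (\<lambda>(a,b). Mul a b) ` ?S"
      by (cases t) (auto intro!: image_eqI[of _ _ "(a,b)" for a b])
  qed auto
  have inj: "inj_on (\<lambda>(a,b). Mul a b) ?S" by (auto simp: inj_on_def)
  have finS: "finite ?S"
  proof (rule finite_subset)
    show "?S \<subseteq> (\<Union>i\<in>{..n}. {t. deg t = i} \<times> {t. deg t = n - i})" by auto
    show "finite (\<Union>i\<in>{..n}. {t. deg t = i} \<times> {t. deg t = n - i})" by (auto intro: fin_deg)
  qed
  have "D (Suc k) n = (\<Sum>p\<in>?S. gt (fst p) * ft (snd p))"
    unfolding D_def img by (subst sum.reindex[OF inj]) (auto simp: gt_Mul intro!: sum.cong)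
  also have "\<dots> = (\<Sum>i\<le>n. \<Sum>p\<in>{p\<in>?S. deg (fst p) = i}. gt (fst p) * ft (snd p))"
    by (rule sum.group[symmetric]) (use finS in auto)
  also have "\<dots> = (\<Sum>i\<le>n. D k i * C (n - i))"
  proof (rule sum.cong[OF refl])
    fix i assume "i \<in> {..n}"
    then have "{p\<in>?S. deg (fst p) = i} = {t. deg t = i \<and> length (args t) = k} \<times> {t. deg t = n - i}"
      by auto
    then show "(\<Sum>p\<in>{p\<in>?S. deg (fst p) = i}. gt (fst p) * ft (snd p)) = D k i * C (n - i)"
      by (simp add: D_def C_def sum_product sum.cartesian_product case_prod_beta)
  qed
  finally show ?thesis .
qed

definition F :: "real fps" where "F = Abs_fps C"

lemma C0: "C 0 = 0"
proof -
  have "{t. deg t = 0} = {}" by auto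
  then show ?thesis by (simp add: C_def)
qed

lemma D_fps: "D k n = (fps_X * F ^ k) $ n"
proof (induction k arbitrary: n)
  case 0
  then show ?case by (simp add: D0 fps_X_def)
next
  case (Suc k)
  have "(fps_X * F ^ Suc k) $ n = ((fps_X * F ^ k) * F) $ n" by (simp add: algebra_simps)
  also have "\<dots> = (\<Sum>i=0..n. D k i * C (n - i))" by (simp add: fps_mult_nth Suc F_def)
  finally show ?case by (simp add: DSuc atMost_atLeast0)
qed

lemma C_eq: "C n = (\<Sum>k<n. bern k / fact k * D k n)"
proof -
  have "C n = (\<Sum>k<n. \<Sum>t\<in>{t\<in>{t. deg t = n}. length (args t) = k}. ft t)"
    unfolding C_def
    by (rule sum.group[symmetric]) (use fin_deg len_args_lt in auto)
  also have "\<dots> = (\<Sum>k<n. bern k / fact k * D k n)"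
    unfolding D_def by (auto simp: ft_eq sum_distrib_left intro!: sum.cong)
  finally show ?thesis .
qed

definition Bg :: "real fps" where "Bg = Abs_fps (\<lambda>k. bern k / fact k)"
definition E :: "real fps" where "E = Abs_fps (\<lambda>m. 1 / fact (m + 1))"

lemma F0: "F $ 0 = 0" by (simp add: F_def C0)

lemma F_eq: "F = fps_X * (Bg oo F)"
proof (rule fps_ext)
  fix n
  show "F $ n = (fps_X * (Bg oo F)) $ n"
  proof (cases n)
    case 0
    then show ?thesis by (simp add: F0)
  next
    case (Suc m)
    have "F $ n = (\<Sum>k<Suc m. bern k / fact k * (F ^ k) $ m)"
      by (simp add: F_def C_eq Suc D_fps fps_X_mult_nth)
    also have "\<dots> = (Bg oo F) $ m"
      by (simp add: fps_compose_nth Bg_def atLeast0AtMost lessThan_Suc_atMost)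
    finally show ?thesis by (simp add: Suc fps_X_mult_nth)
  qed
qed

lemma BgE: "Bg * E = 1"
proof (rule fps_ext)
  fix n
  show "(Bg * E) $ n = 1 $ n"
  proof (cases n)
    case 0
    then show ?thesis by (simp add: Bg_def E_def fps_mult_nth bern0)
  next
    case (Suc m)
    have b: "bern n = - fact n * (\<Sum>k<n. bern k / (fact k * fact (n + 1 - k)))"
      using Suc by (subst bern.simps) simp
    have "(Bg * E) $ n = (\<Sum>i\<le>n. bern i / fact i * (1 / fact (n - i + 1)))"
      by (simp add: Bg_def E_def fps_mult_nth atMost_atLeast0)
    also have "\<dots> = (\<Sum>i<n. bern i / (fact i * fact (n + 1 - i))) + bern n / fact n"
      by (simp add: lessThan_Suc_atMost[symmetric] Suc_diff_le)
    also have "\<dots> = 0" using b by (simp add: field_simps)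
    finally show ?thesis using Suc by simp
  qed
qed

lemma XE: "fps_X * E = fps_exp 1 - 1"
proof (rule fps_ext)
  fix n show "(fps_X * E) $ n = (fps_exp 1 - 1) $ n"
    by (cases n) (simp_all add: E_def fps_X_mult_nth algebra_simps)
qed

lemma F_ln: "F = fps_ln 1"
proof -
  have "F * (E oo F) = fps_X * ((Bg oo F) * (E oo F))"
    by (subst F_eq) (simp add: mult.assoc)
  also have "\<dots> = fps_X * ((Bg * E) oo F)" by (simp add: fps_compose_mult_distrib F0)
  also have "\<dots> = fps_X" by (simp add: BgE)
  finally have 1: "F * (E oo F) = fps_X" .
  have 2: "(fps_exp 1 - 1) oo F = fps_X"
    using 1 by (simp add: XE[symmetric] fps_compose_mult_distrib F0)
  have "fps_ln (1::real) = fps_ln 1 oo ((fps_exp 1 - 1) oo F)" by (simp add: 2)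
  also have "\<dots> = (fps_ln 1 oo (fps_exp 1 - 1)) oo F"
    by (rule fps_compose_assoc) (simp_all add: F0)
  also have "\<dots> = F"
    by (simp add: fps_ln_fps_exp_inv fps_inv_fps_exp_compose F0)
  finally show ?thesis by simp
qed

theorem mainTheorem19:
  fixes n :: nat
  assumes "n \<ge> 1"
  shows "(\<Sum>\<tau>\<in>{\<tau>. deg \<tau> = n}. Bt \<tau> / real (tfact \<tau>)) = (-1) ^ (n + 1) / real n"
proof -
  have "(\<Sum>\<tau>\<in>{\<tau>. deg \<tau> = n}. Bt \<tau> / real (tfact \<tau>)) = C n" by (simp add: C_def ft_def)
  also have "\<dots> = F $ n" by (simp add: F_def)
  also have "\<dots> = (-1) ^ (n - 1) / real n" using assms by (simp add: F_ln fps_ln_nth)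
  also have "(-1::real) ^ (n - 1) = (-1) ^ (n + 1)"
    using assms by (metis (no_types) Suc_diff_le diff_Suc_1 le_add_diff_inverse2 power_Suc2 power_add
        power_minus1_even mult.commute plus_1_eq_Suc mult_minus1_right minus_minus mult_1)
  finally show ?thesis .
qed

end
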